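(* Let $m\ge 2$ be an integer, let $B\subseteq m\mathbb Z$ be a finite nonempty set, and let $F\subseteq\mathbb Z$ be a finite nonempty set all of whose elements are congruent to $\tilde f$ modulo $m$, where $\tilde f\in\{1,\dots,m-1\}$. Suppose there exist an integer $n\ge1$ and sets $S_1,\dots,S_n$ with $S_1\cup\cdots\cup S_n=m\mathbb N\cup B$ such that for each $i$ there is $W_i\subseteq\mathbb Z$ with $m\mathbb Z\setminus S_i=F+W_i$. If \[m\ge \tilde f+2\tilde f\left\lfloor\frac{n}{\tilde f}\right\rfloor+\operatorname{mod}_{\tilde f}n,\] then $C=m\mathbb N\cup B\cup F$ arises as a minimal additive complement in $\mathbb Z$.
   Context: $\mathbb N=\{0,1,2,\dots\}$, $m\mathbb N=\{mk:k\in\mathbb N\}$; $\operatorname{mod}_{a}n$ denotes the remainder of $n$ upon division by $a$. For $C,W\subseteq\mathbb Z$, $C+W=\{c+w:c\in C,w\in W\}$. $C$ is a minimal additive complement (MAC) to $W$ if $C+W=\mathbb Z$ and no proper subset $C'\subsetneq C$ satisfies $C'+W=\mathbb Z$. $C$ arises as a MAC if there exists $W\subseteq\mathbb Z$ to which $C$ is a MAC. *)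

theory Defs
  imports Main
begin

definition sumset :: "int set \<Rightarrow> int set \<Rightarrow> int set" where
  "sumset C W = {c + w | c w. c \<in> C \<and> w \<in> W}"

definition min_add_complement :: "int set \<Rightarrow> int set \<Rightarrow> bool" where
  "min_add_complement C W \<longleftrightarrow>
     sumset C W = UNIV \<and> (\<forall>C'. C' \<subset> C \<longrightarrow> sumset C' W \<noteq> UNIV)"

definition arises_as_MAC :: "int set \<Rightarrow> bool" where
  "arises_as_MAC C \<longleftrightarrow> (\<exists>W. min_add_complement C W)"

definition mult_nat :: "int \<Rightarrow> int set" where
  "mult_nat m = {m * int k | k. True}"

definition mult_int :: "int \<Rightarrow> int set" where
  "mult_int m = {m * k | k. True}"

end

theory Submission
  imports Defs
begin

lemma dvd_small: "(m::int) dvd x \<Longrightarrow> \<bar>x\<bar> < m \<Longrightarrow> x = 0"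
proof (rule ccontr)
  assume a: "m dvd x" "\<bar>x\<bar> < m" "x \<noteq> 0"
  then have "\<bar>m\<bar> \<le> \<bar>x\<bar>" using dvd_imp_le_int by blast
  then show False using a by linarith
qed

definition sig :: "int \<Rightarrow> nat \<Rightarrow> int" where
  "sig ft i = 2*ft*((int i - 1) div ft) + (int i - 1) mod ft"

lemma sig_div: assumes "ft \<ge> 1" "i \<ge> 1"
  shows "sig ft i div (2*ft) = (int i - 1) div ft" and "sig ft i mod (2*ft) = (int i - 1) mod ft"
proof -
  have r: "0 \<le> (int i - 1) mod ft" "(int i - 1) mod ft < 2*ft"
  proof -
    have "0 < ft" using assms by simp
    then show "0 \<le> (int i - 1) mod ft" "(int i - 1) mod ft < 2*ft"
      using pos_mod_bound[OF \<open>0 < ft\<close>, of "int i - 1"] pos_mod_sign[OF \<open>0 < ft\<close>, of "int i - 1"] by linarith+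
  qed
  show "sig ft i div (2*ft) = (int i - 1) div ft"
    unfolding sig_def using r by (simp add: div_add1_eq)
  show "sig ft i mod (2*ft) = (int i - 1) mod ft"
    unfolding sig_def using r by (simp add: mod_add_left_eq[symmetric])
qed

lemma sig_props:
  fixes ft m :: int and n i :: nat
  assumes ft: "ft \<ge> 1" and hineq: "m \<ge> ft + 2 * ft * (int n div ft) + int n mod ft"
    and i: "1 \<le> i" "i \<le> n"
  shows "0 \<le> sig ft i" "sig ft i + ft < m" "sig ft i mod (2*ft) < ft"
proof -
  define x where "x = int i - 1"
  define q where "q = int n div ft"
  define r where "r = int n mod ft"
  define q' where "q' = x div ft"
  define r' where "r' = x mod ft"
  have nq: "int n = ft * q + r" unfolding q_def r_def by simp
  have xq: "x = ft * q' + r'" unfolding q'_def r'_def by simp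
  have r'b: "0 \<le> r'" "r' < ft" unfolding r'_def using ft by auto
  have rb: "0 \<le> r" "r < ft" unfolding r_def using ft by auto
  have x0: "0 \<le> x" "x < int n" unfolding x_def using i by auto
  have q'0: "0 \<le> q'" unfolding q'_def using x0 ft by (simp add: pos_imp_zdiv_nonneg_iff)
  have qq: "q' \<le> q" unfolding q'_def q_def using x0 ft by (simp add: zdiv_mono1)
  have s: "sig ft i = 2*ft*q' + r'" unfolding sig_def x_def[symmetric] q'_def r'_def by simp
  show "0 \<le> sig ft i" using s r'b q'0 ft by simp
  show "sig ft i mod (2*ft) < ft" using sig_div(2)[OF ft i(1)] r'b unfolding x_def r'_def by simp
  show "sig ft i + ft < m"
  proof (cases "q' \<le> q - 1")
    case True
    then have "ft * q' \<le> ft * (q - 1)" using ft by (simp add: mult_left_mono)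
    then show ?thesis using s r'b rb hineq unfolding q_def[symmetric] r_def[symmetric]
      by (simp add: algebra_simps)
  next
    case False
    then have "q' = q" using qq by simp
    then have "r' < r" using xq nq x0 by simp
    then show ?thesis using s \<open>q' = q\<close> hineq unfolding q_def[symmetric] r_def[symmetric]
      by (simp add: algebra_simps)
  qed
qed

lemma sig_inj:
  assumes ft: "ft \<ge> 1" and i: "i \<ge> 1" "j \<ge> 1" and e: "sig ft i = sig ft j"
  shows "i = j"
proof -
  have "(int i - 1) div ft = (int j - 1) div ft" using sig_div(1)[OF ft i(1)] sig_div(1)[OF ft i(2)] e by simp
  moreover have "(int i - 1) mod ft = (int j - 1) mod ft" using sig_div(2)[OF ft i(1)] sig_div(2)[OF ft i(2)] e by simp
  ultimately have "int i - 1 = int j - 1" by (metis div_mult_mod_eq)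
  then show ?thesis by simp
qed

theorem theorem4:
  fixes m ft :: int and n :: nat and B F :: "int set" and S :: "nat \<Rightarrow> int set"
  assumes hm: "m \<ge> 2"
    and hB: "finite B" "B \<noteq> {}" "B \<subseteq> mult_int m"
    and hft: "1 \<le> ft" "ft \<le> m - 1"
    and hF: "finite F" "F \<noteq> {}" "\<forall>x\<in>F. x mod m = ft"
    and hn: "n \<ge> 1"
    and hS: "(\<Union>i\<in>{1..n}. S i) = mult_nat m \<union> B"
    and hW: "\<forall>i\<in>{1..n}. \<exists>W. mult_int m - S i = sumset F W"
    and hineq: "m \<ge> ft + 2 * ft * (int n div ft) + int n mod ft"
  shows "arises_as_MAC (mult_nat m \<union> B \<union> F)"
proof -
  define A where "A = mult_nat m \<union> B"
  have ft0: "0 < ft" using hft by simp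
  obtain Wf where hWf: "\<And>i. i \<in> {1..n} \<Longrightarrow> mult_int m - S i = sumset F (Wf i)"
    using hW by metis
  have mi: "\<And>x. x \<in> mult_int m \<longleftrightarrow> m dvd x" unfolding mult_int_def dvd_def by auto
  define M where "M = min 0 (Min B)"
  have A_prop: "\<And>a. a \<in> A \<Longrightarrow> m dvd a \<and> M \<le> a"
  proof -
    fix a assume "a \<in> A"
    then consider "a \<in> mult_nat m" | "a \<in> B" unfolding A_def by blast
    then show "m dvd a \<and> M \<le> a"
    proof cases
      case 1
      then obtain k where "a = m * int k" unfolding mult_nat_def by auto
      moreover have "0 \<le> m * int k" using hm by simp
      ultimately show ?thesis unfolding M_def by (simp add: min_le_iff_disj)
    next
      case 2
      then have "Min B \<le> a" using hB by simp
      then have "M \<le> a" unfolding M_def by (simp add: min_le_iff_disj)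
      moreover have "m dvd a" using 2 hB mi by auto
      ultimately show ?thesis by simp
    qed
  qed
  have SA: "\<And>i. i \<in> {1..n} \<Longrightarrow> S i \<subseteq> A" using hS unfolding A_def by blast
  define mx where "mx = Max F"
  define mn where "mn = Min F"
  define d where "d = mx - mn"
  have Fb: "\<And>f. f \<in> F \<Longrightarrow> mn \<le> f \<and> f \<le> mx" unfolding mn_def mx_def using hF by simp
  have mnF: "mn \<in> F" "mx \<in> F" unfolding mn_def mx_def using hF by simp_all
  have Fd: "\<And>f. f \<in> F \<Longrightarrow> m dvd (f - ft)"
  proof -
    fix f assume "f \<in> F"
    then have "f mod m = ft" using hF by simp
    then have "f - ft = m * (f div m)" by (metis add_diff_cancel_right' div_mult_mod_eq mult.commute)
    then show "m dvd (f - ft)" by simp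
  qed
  have Fd2: "\<And>f g. f \<in> F \<Longrightarrow> g \<in> F \<Longrightarrow> m dvd (f - g)"
  proof -
    fix f g assume "f \<in> F" "g \<in> F"
    then have "m dvd ((f - ft) - (g - ft))" using Fd dvd_diff by blast
    then show "m dvd (f - g)" by simp
  qed
  have d0: "0 \<le> d" using Fb mnF unfolding d_def by fastforce
  define e where "e = -(\<bar>M\<bar> + (2*d+1)*d + 2*d + \<bar>mx\<bar> + \<bar>mn\<bar> + 1)"
  define E where "E = m * e"
  have dd0: "0 \<le> (2*d+1)*d" using d0 by simp
  have e0: "e < 0" unfolding e_def using d0 dd0 by linarith
  have Ee: "E \<le> e"
  proof -
    have "m * e \<le> 1 * e" using e0 hm by (intro mult_right_mono_neg) auto
    then show ?thesis unfolding E_def by simp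
  qed
  have mdE: "m dvd E" unfolding E_def by simp
  define zf where "zf f = E + (2*d+1)*(f - mn)" for f
  have zf_dvd: "\<And>f. f \<in> F \<Longrightarrow> m dvd zf f"
    unfolding zf_def using mdE Fd2 mnF by (metis dvd_add dvd_mult)
  have zf_b: "\<And>f. f \<in> F \<Longrightarrow> E \<le> zf f \<and> zf f \<le> E + (2*d+1)*d"
  proof -
    fix f assume f: "f \<in> F"
    have "0 \<le> (2*d+1)*(f - mn)" using Fb[OF f] d0 by simp
    moreover have "(2*d+1)*(f - mn) \<le> (2*d+1)*d" using Fb[OF f] d0 unfolding d_def
      by (intro mult_left_mono) auto
    ultimately show "E \<le> zf f \<and> zf f \<le> E + (2*d+1)*d" unfolding zf_def by simp
  qed
  define D where "D = {zf a - a' | a a'. a \<in> F \<and> a' \<in> F \<and> a' \<noteq> a}"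
  have D_b: "\<And>x. x \<in> D \<Longrightarrow> E - mx \<le> x \<and> x + d + mx < M"
  proof -
    fix x assume "x \<in> D"
    then obtain a a' where x: "x = zf a - a'" "a \<in> F" "a' \<in> F" by (auto simp: D_def)
    show "E - mx \<le> x \<and> x + d + mx < M" using zf_b[OF x(2)] Fb[OF x(3)] Ee x(1)
      unfolding e_def d_def by auto
  qed
  define R where "R = {w. m dvd (w + ft) \<and> w + mx < M}"
  define W' where "W' i = (Wf i \<union> R) - D" for i
  have Wf_res: "\<And>i w. i \<in> {1..n} \<Longrightarrow> w \<in> Wf i \<Longrightarrow> m dvd (w + ft)"
  proof -
    fix i w assume i: "i \<in> {1..n}" and w: "w \<in> Wf i"
    have "mn + w \<in> sumset F (Wf i)" unfolding sumset_def using mnF w by blast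
    then have "m dvd (mn + w)" using hWf[OF i] mi by blast
    then have "m dvd ((mn + w) - (mn - ft))" using Fd[OF mnF(1)] dvd_diff by blast
    then show "m dvd (w + ft)" by simp
  qed
  have W'_res: "\<And>i u. i \<in> {1..n} \<Longrightarrow> u \<in> W' i \<Longrightarrow> m dvd (u + ft)"
    using Wf_res unfolding W'_def R_def by blast
  have key: "\<And>i. i \<in> {1..n} \<Longrightarrow> sumset F (W' i) = mult_int m - S i"
  proof -
    fix i assume i: "i \<in> {1..n}"
    show "sumset F (W' i) = mult_int m - S i"
    proof (intro equalityI subsetI)
      fix x assume "x \<in> sumset F (W' i)"
      then obtain f u where x: "x = f + u" "f \<in> F" "u \<in> W' i" unfolding sumset_def by blast
      show "x \<in> mult_int m - S i"
      proof (cases "u \<in> Wf i")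
        case True
        then have "x \<in> sumset F (Wf i)" unfolding sumset_def using x by blast
        then show ?thesis using hWf[OF i] by simp
      next
        case False
        then have u: "u \<in> R" using x(3) unfolding W'_def by blast
        then have "m dvd ((f - ft) + (u + ft))" using Fd[OF x(2)] dvd_add unfolding R_def by blast
        then have "m dvd x" using x(1) by simp
        moreover have "x < M" using u Fb[OF x(2)] x(1) unfolding R_def by simp
        then have "x \<notin> S i" using SA[OF i] A_prop by force
        ultimately show ?thesis using mi by simp
      qed
    next
      fix y assume y: "y \<in> mult_int m - S i"
      then have my: "m dvd y" using mi by simp
      show "y \<in> sumset F (W' i)"
      proof (cases "y + d < M")
        case False
        have "y \<in> sumset F (Wf i)" using y hWf[OF i] by simp
        then obtain f w where fw: "y = f + w" "f \<in> F" "w \<in> Wf i" unfolding sumset_def by blast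
        have "w \<notin> D"
        proof
          assume "w \<in> D"
          then have "w + d + mx < M" using D_b by simp
          then show False using False fw Fb[OF fw(2)] by simp
        qed
        then have "w \<in> W' i" using fw unfolding W'_def by simp
        then show ?thesis using fw unfolding sumset_def by blast
      next
        case True
        have ex: "\<exists>f\<in>F. y - f \<notin> D"
        proof (rule ccontr)
          assume "\<not> (\<exists>f\<in>F. y - f \<notin> D)"
          then have all: "\<And>f. f \<in> F \<Longrightarrow> y - f \<in> D" by blast
          obtain a a' where aa: "y - mn = zf a - a'" "a \<in> F" "a' \<in> F" "a' \<noteq> a"
            using all[OF mnF(1)] unfolding D_def by blast
          have clos: "\<And>f. f \<in> F \<Longrightarrow> f + (zf a - y) \<in> F - {a}"
          proof -
            fix f assume f: "f \<in> F"
            obtain b b' where bb: "y - f = zf b - b'" "b \<in> F" "b' \<in> F" "b' \<noteq> b"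
              using all[OF f] unfolding D_def by blast
            have "b = a"
            proof (rule ccontr)
              assume ne: "b \<noteq> a"
              have eq: "(2*d+1)*(a - b) = a' - b' + f - mn"
                using aa(1) bb(1) unfolding zf_def by (simp add: algebra_simps)
              have bnd: "\<bar>a' - b' + f - mn\<bar> \<le> 2*d"
                using Fb[OF aa(3)] Fb[OF bb(3)] Fb[OF f] unfolding d_def by auto
              have "1 \<le> \<bar>a - b\<bar>" using ne by simp
              then have "(2*d+1) * 1 \<le> (2*d+1) * \<bar>a - b\<bar>" using d0 by (intro mult_left_mono) auto
              also have "\<dots> = \<bar>(2*d+1)*(a - b)\<bar>" using d0 by (simp add: abs_mult)
              finally show False using eq bnd by simp
            qed
            moreover have "f + (zf a - y) = b'" using bb(1) \<open>b = a\<close> by simp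
            ultimately show "f + (zf a - y) \<in> F - {a}" using bb by simp
          qed
          have k1: "zf a - y \<le> 0" using clos[OF mnF(2)] Fb by fastforce
          have k2: "zf a - y \<ge> 0" using clos[OF mnF(1)] Fb by fastforce
          have "a + (zf a - y) \<in> F - {a}" using clos[OF aa(2)] .
          then show False using k1 k2 by simp
        qed
        then obtain f where f: "f \<in> F" "y - f \<notin> D" by blast
        have "m dvd (y - (f - ft))" using my Fd[OF f(1)] dvd_diff by blast
        then have "m dvd (y - f + ft)" by (simp add: algebra_simps)
        moreover have "y - f + mx < M" using True Fb[OF f(1)] unfolding d_def by simp
        ultimately have "y - f \<in> W' i" using f unfolding W'_def R_def by simp
        then have "f + (y - f) \<in> sumset F (W' i)" unfolding sumset_def using f by blast
        then show ?thesis by simp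
      qed
    qed
  qed
  define sg where "sg = sig ft"
  have sgp: "\<And>i. i \<in> {1..n} \<Longrightarrow> 0 \<le> sg i \<and> sg i + ft < m \<and> sg i mod (2*ft) < ft"
    unfolding sg_def using sig_props[OF hft(1) hineq] by auto
  have sep1: "\<And>i j. i \<in> {1..n} \<Longrightarrow> j \<in> {1..n} \<Longrightarrow> m dvd (sg i - sg j) \<Longrightarrow> i = j"
  proof -
    fix i j assume i: "i \<in> {1..n}" and j: "j \<in> {1..n}" and dv: "m dvd (sg i - sg j)"
    have "\<bar>sg i - sg j\<bar> < m" using sgp[OF i] sgp[OF j] hft by auto
    then have "sg i = sg j" using dvd_small[OF dv] by simp
    then show "i = j" using sig_inj[OF hft(1)] i j unfolding sg_def by auto
  qed
  have sep2: "\<And>i j. i \<in> {1..n} \<Longrightarrow> j \<in> {1..n} \<Longrightarrow> \<not> m dvd (sg i + ft - sg j)"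
  proof
    fix i j assume i: "i \<in> {1..n}" and j: "j \<in> {1..n}" and dv: "m dvd (sg i + ft - sg j)"
    have "\<bar>sg i + ft - sg j\<bar> < m" using sgp[OF i] sgp[OF j] hft by auto
    then have eq: "sg j = sg i + ft" using dvd_small[OF dv] by simp
    have "(sg i + ft) mod (2*ft) = ((sg i mod (2*ft)) + ft) mod (2*ft)"
      by (simp add: mod_add_left_eq)
    also have "\<dots> = sg i mod (2*ft) + ft"
      using sgp[OF i] ft0 by (intro mod_pos_pos_trivial) auto
    finally have "sg j mod (2*ft) \<ge> ft" using eq ft0 by simp
    then show False using sgp[OF j] by simp
  qed
  define Oth where "Oth = {w. \<forall>i\<in>{1..n}. \<not> m dvd (w - sg i) \<and> \<not> m dvd (w - sg i + ft)}"
  define W where "W = (\<Union>i\<in>{1..n}. insert (sg i) ((+) (sg i) ` W' i)) \<union> Oth"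
  have W_cases0: "\<And>w i. w \<in> W \<Longrightarrow> i \<in> {1..n} \<Longrightarrow> m dvd (w - sg i) \<Longrightarrow> w = sg i"
  proof -
    fix w i assume w: "w \<in> W" and i: "i \<in> {1..n}" and dv: "m dvd (w - sg i)"
    have "w \<notin> Oth" using i dv unfolding Oth_def by auto
    then obtain j where j: "j \<in> {1..n}" "w \<in> insert (sg j) ((+) (sg j) ` W' j)"
      using w unfolding W_def by blast
    show "w = sg i"
    proof (cases "w = sg j")
      case True
      then show ?thesis using sep1[OF j(1) i] dv by simp
    next
      case False
      then obtain u where u: "u \<in> W' j" "w = sg j + u" using j by auto
      have "m dvd ((w - sg i) - (u + ft))" using dv W'_res[OF j(1) u(1)] dvd_diff by blast
      moreover have "(w - sg i) - (u + ft) = - (sg i + ft - sg j)" using u by simp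
      ultimately have "m dvd (sg i + ft - sg j)" using dvd_minus_iff by metis
      then show ?thesis using sep2[OF i j(1)] by simp
    qed
  qed
  have W_cases1: "\<And>w i. w \<in> W \<Longrightarrow> i \<in> {1..n} \<Longrightarrow> m dvd (w - sg i + ft) \<Longrightarrow> \<exists>u\<in>W' i. w = sg i + u"
  proof -
    fix w i assume w: "w \<in> W" and i: "i \<in> {1..n}" and dv: "m dvd (w - sg i + ft)"
    have "w \<notin> Oth" using i dv unfolding Oth_def by auto
    then obtain j where j: "j \<in> {1..n}" "w \<in> insert (sg j) ((+) (sg j) ` W' j)"
      using w unfolding W_def by blast
    show "\<exists>u\<in>W' i. w = sg i + u"
    proof (cases "w = sg j")
      case True
      then show ?thesis using sep2[OF j(1) i] dv by (simp add: algebra_simps)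
    next
      case False
      then obtain u where u: "u \<in> W' j" "w = sg j + u" using j by auto
      have "m dvd ((w - sg i + ft) - (u + ft))" using dv W'_res[OF j(1) u(1)] dvd_diff by blast
      moreover have "(w - sg i + ft) - (u + ft) = sg j - sg i" using u by simp
      ultimately have "m dvd (sg j - sg i)" by metis
      then have "j = i" using sep1[OF j(1) i] by simp
      then show ?thesis using u by blast
    qed
  qed
  have C_cases: "\<And>c. c \<in> mult_nat m \<union> B \<union> F \<Longrightarrow> c \<in> A \<or> c \<in> F" unfolding A_def by blast
  have n1: "1 \<in> {1..n}" using hn by simp
  have cover: "sumset (mult_nat m \<union> B \<union> F) W = UNIV"
  proof (intro set_eqI iffI)
    fix z :: int
    show "z \<in> sumset (mult_nat m \<union> B \<union> F) W"
    proof (cases "\<exists>i\<in>{1..n}. m dvd (z - sg i)")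
      case True
      then obtain i where i: "i \<in> {1..n}" "m dvd (z - sg i)" by blast
      have sW: "sg i \<in> W" using i unfolding W_def by blast
      show ?thesis
      proof (cases "z - sg i \<in> S i")
        case True
        then have "z - sg i \<in> mult_nat m \<union> B \<union> F" using SA[OF i(1)] unfolding A_def by blast
        then show ?thesis using sW unfolding sumset_def by force
      next
        case False
        then have "z - sg i \<in> sumset F (W' i)" using key[OF i(1)] i(2) mi by simp
        then obtain f u where fu: "z - sg i = f + u" "f \<in> F" "u \<in> W' i" unfolding sumset_def by blast
        have "sg i + u \<in> W" using i fu unfolding W_def by blast
        moreover have "z = f + (sg i + u)" using fu by simp
        ultimately show ?thesis using fu unfolding sumset_def by blast
      qed
    next
      case False
      show ?thesis
      proof (cases "\<exists>i\<in>{1..n}. m dvd (z - sg i + ft)")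
        case True
        then obtain i where i: "i \<in> {1..n}" "m dvd (z - sg i + ft)" by blast
        define k where "k = nat (\<bar>z - sg i\<bar> + \<bar>E\<bar> + \<bar>mx\<bar> + 1)"
        have kk: "int k = \<bar>z - sg i\<bar> + \<bar>E\<bar> + \<bar>mx\<bar> + 1" unfolding k_def by simp
        have "1 * int k \<le> m * int k" using hm by (intro mult_right_mono) auto
        then have mk: "int k \<le> m * int k" by simp
        define u where "u = z - sg i - m * int k"
        have "u + mx < E" unfolding u_def using kk mk by linarith
        moreover have "E < M" using Ee dd0 d0 unfolding e_def by linarith
        moreover have "m dvd (u + ft)" unfolding u_def using i(2)
          by (metis (no_types, lifting) diff_add_eq dvd_diff dvd_triv_left)
        ultimately have uR: "u \<in> R" unfolding R_def by simp
        have "u \<notin> D" using D_b \<open>u + mx < E\<close> by force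
        then have "u \<in> W' i" using uR unfolding W'_def by simp
        then have "sg i + u \<in> W" using i unfolding W_def by blast
        moreover have "m * int k \<in> mult_nat m \<union> B \<union> F" unfolding mult_nat_def by blast
        moreover have "z = m * int k + (sg i + u)" unfolding u_def by simp
        ultimately show ?thesis unfolding sumset_def by blast
      next
        case False2: False
        then have "z \<in> W" using False unfolding W_def Oth_def by blast
        moreover have "0 \<in> mult_nat m \<union> B \<union> F" unfolding mult_nat_def by force
        ultimately show ?thesis unfolding sumset_def by force
      qed
    qed
  qed simp
  have minimal: "\<forall>C'. C' \<subset> mult_nat m \<union> B \<union> F \<longrightarrow> sumset C' W \<noteq> UNIV"
  proof (intro allI impI)
    fix C' assume sub: "C' \<subset> mult_nat m \<union> B \<union> F"
    then obtain c0 where c0: "c0 \<in> mult_nat m \<union> B \<union> F" "c0 \<notin> C'" by blast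
    have "\<exists>z. \<forall>c w. c \<in> mult_nat m \<union> B \<union> F \<longrightarrow> w \<in> W \<longrightarrow> z = c + w \<longrightarrow> c = c0"
    proof (cases "c0 \<in> A")
      case True
      then obtain i where i: "i \<in> {1..n}" "c0 \<in> S i" using hS unfolding A_def by blast
      show ?thesis
      proof (intro exI allI impI)
        fix c w assume c: "c \<in> mult_nat m \<union> B \<union> F" and w: "w \<in> W" and z: "c0 + sg i = c + w"
        consider "c \<in> A" | "c \<in> F" using C_cases[OF c] by blast
        then show "c = c0"
        proof cases
          case 1
          have "m dvd (c0 - c)" using A_prop[OF 1] A_prop[OF True] dvd_diff by blast
          moreover have "c0 - c = w - sg i" using z by simp
          ultimately have "w = sg i" using W_cases0[OF w i(1)] by simp
          then show ?thesis using z by simp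
        next
          case 2
          have "m dvd (c0 - (c - ft))" using A_prop[OF True] Fd[OF 2] dvd_diff by blast
          moreover have "c0 - (c - ft) = w - sg i + ft" using z by simp
          ultimately obtain u where u: "u \<in> W' i" "w = sg i + u" using W_cases1[OF w i(1)] by auto
          have "c0 = c + u" using z u by simp
          then have "c0 \<in> sumset F (W' i)" using 2 u unfolding sumset_def by blast
          then show ?thesis using key[OF i(1)] i(2) by simp
        qed
      qed
    next
      case False
      then have c0F: "c0 \<in> F" using C_cases[OF c0(1)] by blast
      show ?thesis
      proof (intro exI allI impI)
        fix c w assume c: "c \<in> mult_nat m \<union> B \<union> F" and w: "w \<in> W" and z: "zf c0 + sg 1 = c + w"
        consider "c \<in> A" | "c \<in> F" using C_cases[OF c] by blast
        then show "c = c0"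
        proof cases
          case 1
          have "m dvd (zf c0 - c)" using A_prop[OF 1] zf_dvd[OF c0F] dvd_diff by blast
          moreover have "zf c0 - c = w - sg 1" using z by simp
          ultimately have "w = sg 1" using W_cases0[OF w n1] by simp
          then have "c = zf c0" using z by simp
          moreover have "zf c0 < M" using zf_b[OF c0F] Ee dd0 d0 unfolding e_def by linarith
          ultimately show ?thesis using A_prop[OF 1] by simp
        next
          case 2
          have "m dvd (zf c0 - (c - ft))" using zf_dvd[OF c0F] Fd[OF 2] dvd_diff by blast
          moreover have "zf c0 - (c - ft) = w - sg 1 + ft" using z by simp
          ultimately obtain u where u: "u \<in> W' 1" "w = sg 1 + u" using W_cases1[OF w n1] by auto
          have uu: "u = zf c0 - c" using z u by simp
          show ?thesis
          proof (rule ccontr)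
            assume "c \<noteq> c0"
            then have "u \<in> D" unfolding D_def uu using c0F 2 by blast
            then show False using u unfolding W'_def by simp
          qed
        qed
      qed
    qed
    then obtain z where z: "\<And>c w. c \<in> mult_nat m \<union> B \<union> F \<Longrightarrow> w \<in> W \<Longrightarrow> z = c + w \<Longrightarrow> c = c0" by blast
    have "z \<notin> sumset C' W"
    proof
      assume "z \<in> sumset C' W"
      then obtain c w where "c \<in> C'" "w \<in> W" "z = c + w" unfolding sumset_def by blast
      then show False using z[of c w] sub c0 by blast
    qed
    then show "sumset C' W \<noteq> UNIV" by blast
  qed
  show ?thesis unfolding arises_as_MAC_def min_add_complement_def using cover minimal by blast
qed

end
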